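(* Let $A\in M_n(\mathbb{F}_2)$ for some $n\geq 1$. Then there exist $N,D\in M_n(\mathbb{F}_2)$ with $A=N+D$, $N^2=0$ and $D^4=D$.
   Context: $\mathbb{F}_2$ denotes the field with two elements. *)

theory Defs
  imports "HOL-Analysis.Analysis" "HOL-Library.Z2"
begin

end

theory Submission
  imports Defs "HOL-Computational_Algebra.Computational_Algebra"
begin


instance bit :: finite
proof
  have "(UNIV :: bit set) = {0, 1}" by (auto intro: bit.exhaust)
  then show "finite (UNIV :: bit set)" by (metis finite.emptyI finite.insertI)
qed

instantiation bit ::
  "{unique_euclidean_ring, normalization_euclidean_semiring, normalization_semidom_multiplicative}"
begin
definition [simp]: "normalize_bit = (\<lambda>x::bit. x)"
definition [simp]: "unit_factor_bit = (\<lambda>x::bit. x)"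
definition [simp]: "euclidean_size_bit = (\<lambda>x::bit. if x = 0 then 0 else (1::nat))"
definition [simp]: "division_segment (x :: bit) = 1"
instance
  by standard
    (simp_all add: dvd_field_iff field_split_simps split: if_splits)
end

instantiation bit :: euclidean_ring_gcd
begin
definition gcd_bit :: "bit \<Rightarrow> bit \<Rightarrow> bit" where
  "gcd_bit = Euclidean_Algorithm.gcd"
definition lcm_bit :: "bit \<Rightarrow> bit \<Rightarrow> bit" where
  "lcm_bit = Euclidean_Algorithm.lcm"
definition Gcd_bit :: "bit set \<Rightarrow> bit" where
 "Gcd_bit = Euclidean_Algorithm.Gcd"
definition Lcm_bit :: "bit set \<Rightarrow> bit" where
 "Lcm_bit = Euclidean_Algorithm.Lcm"
instance by standard (simp_all add: gcd_bit_def lcm_bit_def Gcd_bit_def Lcm_bit_def)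
end

instance bit :: field_gcd ..

lemma bit_add_self [simp]: "(a::bit) + a = 0"
  by (cases a) simp_all

lemma bit_add_self2 [simp]: "(a::bit) + (a + b) = b"
  by (cases a) simp_all

lemma bit_mult_self [simp]: "(a::bit) * a = a"
  by (cases a) simp_all

lemma vec_add_self [simp]: "(x::bit^'n) + x = 0"
  by (simp add: vec_eq_iff)

lemma vec_add_self2 [simp]: "(x::bit^'n) + (x + y) = y"
  by (simp add: vec_eq_iff)

lemma vec_minus_eq_plus: "(x::bit^'n) - y = x + y"
  by (simp add: vec_eq_iff)

lemma vec_uminus_eq: "- (x::bit^'n) = x"
  by (simp add: vec_eq_iff)

lemma bit_scale_cases: "(c::bit) *s x = (if c = 0 then 0 else x)"
  by (cases c) (simp_all add: vec_eq_iff)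

lemma poly_bit_lead: "(p::bit poly) \<noteq> 0 \<Longrightarrow> lead_coeff p = 1"
  by (metis bit_not_zero_iff leading_coeff_neq_0)

section \<open>Polynomial evaluation at linear maps\<close>

abbreviation lin :: "(bit^'n \<Rightarrow> bit^'n) \<Rightarrow> bool" where
  "lin f \<equiv> Vector_Spaces.linear (*s) (*s) f"

definition peval :: "bit poly \<Rightarrow> (bit^'n \<Rightarrow> bit^'n) \<Rightarrow> bit^'n \<Rightarrow> bit^'n" where
  "peval p f x = fold_coeffs (\<lambda>a r. a *s x + f r) p 0"

lemma lin_add: "lin f \<Longrightarrow> f (x + y) = f x + f y"
  by (simp add: Vector_Spaces.linear_iff)

lemma lin_scale: "lin f \<Longrightarrow> f (c *s x) = c *s f x"
  by (simp add: Vector_Spaces.linear_iff)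

lemma lin_0: "lin f \<Longrightarrow> f 0 = 0"
  by (metis add_cancel_right_right lin_add)

lemma lin_sum: "lin f \<Longrightarrow> f (\<Sum>i\<in>S. g i) = (\<Sum>i\<in>S. f (g i))"
  by (induct S rule: infinite_finite_induct) (simp_all add: lin_0 lin_add)

lemma lin_intro:
  fixes f :: "bit^'n \<Rightarrow> bit^'n"
  assumes "\<And>x y. f (x + y) = f x + f y"
  shows "lin f"
proof -
  have f0: "f 0 = 0" by (metis add_cancel_right_right assms)
  have "f (c *s x) = c *s f x" for c x by (cases c) (simp_all add: f0)
  then show ?thesis using assms
    by (simp add: Vector_Spaces.linear_iff vec.vector_space_axioms)
qed

lemma lin_comp: "lin f \<Longrightarrow> lin g \<Longrightarrow> lin (\<lambda>x. f (g x))"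
  by (rule lin_intro) (simp add: lin_add)

lemma lin_funpow: "lin f \<Longrightarrow> lin (f ^^ k)"
  by (induct k) (simp_all add: lin_intro lin_add)


lemma peval_0 [simp]: "peval 0 f x = 0"
  by (simp add: peval_def)

lemma peval_pCons: "lin f \<Longrightarrow> peval (pCons a p) f x = a *s x + f (peval p f x)"
proof (cases "p = 0 \<and> a = 0")
  case True
  assume "lin f"
  then show ?thesis using True by (simp add: peval_def lin_0)
next
  case False
  then show ?thesis
    by (cases "p = 0") (auto simp: peval_def)
qed

context
  fixes f :: "bit^'n \<Rightarrow> bit^'n"
  assumes lf: "lin f"
begin

lemma peval_add: "peval (p + q) f x = peval p f x + peval q f x"
proof (induct p q rule: poly_induct2)
  case 0 then show ?case by simp
next
  case (pCons a p b q)
  have "peval (pCons a p + pCons b q) f x = peval (pCons (a+b) (p+q)) f x" by simp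
  also have "\<dots> = (a+b) *s x + f (peval (p+q) f x)" by (rule peval_pCons[OF lf])
  also have "\<dots> = (a *s x + f (peval p f x)) + (b *s x + f (peval q f x))"
    by (simp only: vector_sadd_rdistrib lin_add[OF lf] pCons add_ac)
  also have "\<dots> = peval (pCons a p) f x + peval (pCons b q) f x"
    by (simp only: peval_pCons[OF lf])
  finally show ?case .
qed

lemma peval_smult: "peval (smult c p) f x = c *s peval p f x"
  by (induct p rule: pCons_induct)
     (simp_all add: peval_pCons[OF lf] lin_scale[OF lf] lin_0[OF lf] vector_add_ldistrib)

lemma peval_linear_x: "peval p f (x + y) = peval p f x + peval p f y"
  by (induct p rule: pCons_induct)
     (simp_all add: peval_pCons[OF lf] lin_add[OF lf] lin_0[OF lf] vector_add_ldistrib algebra_simps)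

lemma peval_scale_x: "peval p f (c *s x) = c *s peval p f x"
  by (induct p rule: pCons_induct)
     (simp_all add: peval_pCons[OF lf] lin_scale[OF lf] lin_0[OF lf] vector_add_ldistrib vector_smult_assoc mult.commute)

lemma peval_zero_x [simp]: "peval p f 0 = 0"
  by (metis add_cancel_right_right peval_linear_x)

lemma lin_peval: "lin (peval p f)"
  by (rule lin_intro) (rule peval_linear_x)

lemma peval_mult: "peval (p * q) f x = peval p f (peval q f x)"
proof (induct p rule: pCons_induct)
  case 0 then show ?case by simp
next
  case (pCons a p)
  have "pCons a p * q = smult a q + pCons 0 (p * q)" by simp
  then show ?case using pCons.hyps
    by (simp add: peval_add peval_smult peval_pCons[OF lf])
qed

lemma peval_comm: "f (peval p f x) = peval p f (f x)"
  by (induct p rule: pCons_induct)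
     (simp_all add: peval_pCons[OF lf] lin_add[OF lf] lin_scale[OF lf] lin_0[OF lf])

lemma peval_1 [simp]: "peval 1 f x = x"
  by (simp add: one_pCons peval_pCons[OF lf] lin_0[OF lf])

lemma peval_const: "peval [:c:] f x = c *s x"
  by (simp add: peval_pCons[OF lf] lin_0[OF lf])

lemma peval_X: "peval [:0, 1:] f x = f x"
  by (simp add: peval_pCons[OF lf] lin_0[OF lf])

lemma peval_monom: "peval (monom c k) f x = c *s (f ^^ k) x"
proof (induct k)
  case 0 then show ?case by (simp add: monom_0 peval_const)
next
  case (Suc k)
  then show ?case by (simp add: monom_Suc peval_pCons[OF lf] lin_scale[OF lf])
qed

lemma peval_sum_poly: "peval (\<Sum>i\<in>S. p i) f x = (\<Sum>i\<in>S. peval (p i) f x)"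
  by (induct S rule: infinite_finite_induct) (simp_all add: peval_add)

lemma peval_as_sum: "peval p f x = (\<Sum>i\<le>degree p. coeff p i *s (f ^^ i) x)"
proof -
  have "peval p f x = peval (\<Sum>i\<le>degree p. monom (coeff p i) i) f x"
    by (simp add: poly_as_sum_of_monoms)
  also have "\<dots> = (\<Sum>i\<le>degree p. coeff p i *s (f ^^ i) x)"
    by (simp add: peval_sum_poly peval_monom)
  finally show ?thesis .
qed

lemma peval_commute: "peval p f (peval q f x) = peval q f (peval p f x)"
  by (simp add: peval_mult[symmetric] mult.commute)

lemma peval_X_mult: "peval ([:0,1:] * p) f x = f (peval p f x)"
  by (simp add: peval_pCons[OF lf])

end


section \<open>Decomposability on invariant subspaces\<close>

definition DEC :: "(bit^'n \<Rightarrow> bit^'n) \<Rightarrow> (bit^'n) set \<Rightarrow> bool" where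
  "DEC f W \<longleftrightarrow> (\<exists>N D. (\<forall>x\<in>W. \<forall>y\<in>W. N (x+y) = N x + N y \<and> D (x+y) = D x + D y) \<and>
     (\<forall>x\<in>W. N x \<in> W \<and> D x \<in> W \<and> f x = N x + D x \<and> N (N x) = 0 \<and> D (D (D (D x))) = D x))"

lemma DEC_zero: "lin f \<Longrightarrow> DEC f {0}"
  unfolding DEC_def by (rule exI[of _ "\<lambda>x. 0"], rule exI[of _ "\<lambda>x. 0"]) (simp add: lin_0)

lemma DEC_sum:
  fixes f :: "bit^'n \<Rightarrow> bit^'n"
  assumes lf: "lin f"
    and c1: "\<And>x y. x \<in> W1 \<Longrightarrow> y \<in> W1 \<Longrightarrow> x + y \<in> W1"
    and c2: "\<And>x y. x \<in> W2 \<Longrightarrow> y \<in> W2 \<Longrightarrow> x + y \<in> W2"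
    and int: "W1 \<inter> W2 \<subseteq> {0}"
    and W: "W = {a + b | a b. a \<in> W1 \<and> b \<in> W2}"
    and d1: "DEC f W1" and d2: "DEC f W2"
  shows "DEC f W"
proof -
  obtain N1 D1 where h1: "\<forall>x\<in>W1. \<forall>y\<in>W1. N1 (x+y) = N1 x + N1 y \<and> D1 (x+y) = D1 x + D1 y"
    "\<forall>x\<in>W1. N1 x \<in> W1 \<and> D1 x \<in> W1 \<and> f x = N1 x + D1 x \<and> N1 (N1 x) = 0 \<and> D1 (D1 (D1 (D1 x))) = D1 x"
    using d1 unfolding DEC_def by blast
  obtain N2 D2 where h2: "\<forall>x\<in>W2. \<forall>y\<in>W2. N2 (x+y) = N2 x + N2 y \<and> D2 (x+y) = D2 x + D2 y"
    "\<forall>x\<in>W2. N2 x \<in> W2 \<and> D2 x \<in> W2 \<and> f x = N2 x + D2 x \<and> N2 (N2 x) = 0 \<and> D2 (D2 (D2 (D2 x))) = D2 x"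
    using d2 unfolding DEC_def by blast
  define pr where "pr x = (THE a. a \<in> W1 \<and> x + a \<in> W2)" for x
  have pr: "pr (a + b) = a" if "a \<in> W1" "b \<in> W2" for a b
    unfolding pr_def
  proof (rule the_equality)
    show "a \<in> W1 \<and> a + b + a \<in> W2" using that by (simp add: add.commute)
    fix a' assume a': "a' \<in> W1 \<and> a + b + a' \<in> W2"
    then have "a + a' \<in> W1" using c1 that by blast
    moreover have "(a + b + a') + b \<in> W2" using a' c2 that by blast
    then have "a + a' \<in> W2" by (simp add: add_ac)
    ultimately have "a + a' = 0" using int by blast
    then show "a' = a" by (metis vec_add_self2 add.right_neutral)
  qed
  define N where "N x = N1 (pr x) + N2 (x + pr x)" for x
  define D where "D x = D1 (pr x) + D2 (x + pr x)" for x
  have Nab: "N (a + b) = N1 a + N2 b" if "a \<in> W1" "b \<in> W2" for a b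
    using that by (simp add: N_def pr add_ac)
  have Dab: "D (a + b) = D1 a + D2 b" if "a \<in> W1" "b \<in> W2" for a b
    using that by (simp add: D_def pr add_ac)
  have add: "N (x + y) = N x + N y \<and> D (x + y) = D x + D y" if xW: "x \<in> W" and yW: "y \<in> W" for x y
  proof -
    obtain a b a' b' where x: "x = a + b" "a \<in> W1" "b \<in> W2" and y: "y = a' + b'" "a' \<in> W1" "b' \<in> W2"
      using W xW yW by blast
    have xy: "x + y = (a + a') + (b + b')" using x y by (simp add: add_ac)
    have "N (x + y) = N1 (a + a') + N2 (b + b')"
      using Nab[OF c1[OF x(2) y(2)] c2[OF x(3) y(3)]] xy by simp
    moreover have "D (x + y) = D1 (a + a') + D2 (b + b')"
      using Dab[OF c1[OF x(2) y(2)] c2[OF x(3) y(3)]] xy by simp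
    ultimately show ?thesis
      using x y h1 h2 Nab Dab by (simp add: add_ac)
  qed
  have props: "N x \<in> W \<and> D x \<in> W \<and> f x = N x + D x \<and> N (N x) = 0 \<and> D (D (D (D x))) = D x"
    if xW: "x \<in> W" for x
  proof -
    obtain a b where x: "x = a + b" "a \<in> W1" "b \<in> W2" using W xW by blast
    have Nx: "N x = N1 a + N2 b" and Dx: "D x = D1 a + D2 b" using x Nab Dab by auto
    have "N x \<in> W" using Nx x h1 h2 W by blast
    moreover have "D x \<in> W" using Dx x h1 h2 W by blast
    moreover have "f x = N x + D x" using Nx Dx x h1 h2 lin_add[OF lf, of a b] by (simp add: add_ac)
    moreover have "N (N x) = 0" using Nx x h1 h2 Nab by simp
    moreover have D2x: "D (D x) = D1 (D1 a) + D2 (D2 b)" using Dx x h1 h2 Dab by simp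
    moreover have D3x: "D (D (D x)) = D1 (D1 (D1 a)) + D2 (D2 (D2 b))" using D2x x h1 h2 Dab by simp
    moreover have "D (D (D (D x))) = D x" using D3x Dx x h1 h2 Dab by simp
    ultimately show ?thesis by blast
  qed
  show ?thesis unfolding DEC_def using add props by blast
qed


section \<open>Structure: reduction to cyclic pieces\<close>

definition sub :: "(bit^'n) set \<Rightarrow> bool" where
  "sub W \<longleftrightarrow> 0 \<in> W \<and> (\<forall>x\<in>W. \<forall>y\<in>W. x + y \<in> W)"

lemma sub_scale: "sub W \<Longrightarrow> x \<in> W \<Longrightarrow> (c::bit) *s x \<in> W"
  by (cases c) (simp_all add: sub_def)

lemma sub_sum:
  assumes W: "sub W" and g: "\<And>i. i \<in> S \<Longrightarrow> g i \<in> W"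
  shows "(\<Sum>i\<in>S. g i) \<in> W"
  using g
proof (induct S rule: infinite_finite_induct)
  case (infinite A) then show ?case using W by (simp add: sub_def)
next
  case empty then show ?case using W by (simp add: sub_def)
next
  case (insert x F) then show ?case using W by (simp add: sub_def)
qed

lemma peval_in_sub:
  assumes lf: "lin f" and W: "sub W" and inv: "f ` W \<subseteq> W" and x: "x \<in> W"
  shows "peval h f x \<in> W"
proof (induct h rule: pCons_induct)
  case 0 then show ?case using W by (simp add: sub_def)
next
  case (pCons a p)
  then have "f (peval p f x) \<in> W" using inv by blast
  then show ?case using W x sub_scale[OF W x, of a]
    by (simp add: peval_pCons[OF lf] sub_def)
qed

lemma ann_exists:
  fixes f :: "bit^'n \<Rightarrow> bit^'n"
  assumes lf: "lin f"
  shows "\<exists>P. P \<noteq> 0 \<and> (\<forall>x. peval P f x = 0)"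
proof -
  have "\<not> inj (\<lambda>k::nat. f ^^ k)"
  proof
    assume "inj (\<lambda>k::nat. f ^^ k)"
    moreover have "finite (range (\<lambda>k::nat. f ^^ k))" by (rule finite_subset[of _ UNIV]) auto
    ultimately have "finite (UNIV :: nat set)" using finite_imageD by blast
    then show False by simp
  qed
  then obtain i j where ij: "i \<noteq> j" "f ^^ i = f ^^ j" unfolding inj_def by blast
  define P where "P = monom (1::bit) j + monom 1 i"
  have "coeff P j = 1" using ij by (simp add: P_def coeff_monom)
  then have "P \<noteq> 0" by auto
  moreover have "peval P f x = 0" for x
    using ij by (simp add: P_def peval_add[OF lf] peval_monom[OF lf])
  ultimately show ?thesis by blast
qed

lemma bit_poly_unit: "is_unit (P::bit poly) \<Longrightarrow> P = 1"
proof -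
  assume u: "is_unit P"
  then have P0: "P \<noteq> 0" by auto
  then have "degree P = 0" using u is_unit_iff_degree by blast
  then have "P = [:coeff P 0:]" by (simp add: degree_0_id)
  moreover have "coeff P 0 \<noteq> 0" using P0 \<open>P = [:coeff P 0:]\<close> by (metis pCons_0_0)
  ultimately show "P = 1" by (simp add: one_pCons)
qed

lemma prime_degree_pos: "prime (q::bit poly) \<Longrightarrow> degree q > 0"
  using is_unit_iff_degree[of q] not_prime_unit[of q] by (cases "q = 0") auto




definition mm :: "nat \<Rightarrow> (nat \<Rightarrow> nat \<Rightarrow> bit) \<Rightarrow> (nat \<Rightarrow> nat \<Rightarrow> bit) \<Rightarrow> nat \<Rightarrow> nat \<Rightarrow> bit" where
  "mm l A B i j = (\<Sum>k<l. A i k * B k j)"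

definition compm :: "nat \<Rightarrow> (nat \<Rightarrow> bit) \<Rightarrow> nat \<Rightarrow> nat \<Rightarrow> bit" where
  "compm l a i j = (if j + 1 < l then (if i = j + 1 then 1 else 0) else a i)"

definition BaseOK :: "nat \<Rightarrow> nat \<Rightarrow> (nat \<Rightarrow> bit) \<Rightarrow> (nat \<Rightarrow> nat \<Rightarrow> bit) \<Rightarrow> (nat \<Rightarrow> nat \<Rightarrow> bit) \<Rightarrow> bool" where
  "BaseOK K l a NB DB \<longleftrightarrow>
     (\<forall>i<l. \<forall>j<l. NB i j + DB i j = compm l a i j) \<and>
     (\<forall>i<l. \<forall>j<l. mm l NB NB i j = 0) \<and>
     (\<forall>i<l. \<forall>j<l. mm l DB (mm l DB (mm l DB DB)) i j = DB i j) \<and>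
     (0 < K \<longrightarrow> (\<forall>i<l. NB i 0 = 0) \<and> (\<forall>j<l. mm l DB DB (l - 1) j = DB (l - 1) j))"

definition tab :: "bit list list \<Rightarrow> nat \<Rightarrow> nat \<Rightarrow> bit" where
  "tab xs i j = xs ! i ! j"

lemma all4: "(\<forall>i<(4::nat). P i) \<longleftrightarrow> P 0 \<and> P 1 \<and> P 2 \<and> P 3"
  by (auto simp: numeral_eq_Suc less_Suc_eq)

lemma sum4: "(\<Sum>k<(4::nat). g k) = g 0 + g 1 + g 2 + g 3"
  by (simp add: numeral_eq_Suc add_ac)

lemma bitcases: "(\<And>x::bit. x = 0 \<Longrightarrow> P) \<Longrightarrow> (\<And>x::bit. x = 1 \<Longrightarrow> P) \<Longrightarrow> P" by simp

lemma base4_1: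
  assumes "\<not> (a 0 = 1 \<and> a 3 = 1)"
  shows "BaseOK K 4 a (tab [[0,0,0,0],[0,0,1,1],[0,0,1,1],[0,0,1,1]])
                   (\<lambda>i j. compm 4 a i j + tab [[0,0,0,0],[0,0,1,1],[0,0,1,1],[0,0,1,1]] i j)"
  using assms
  apply (cases "a 0"; cases "a 1"; cases "a 2"; cases "a 3")
  apply (simp_all add: BaseOK_def all4 mm_def sum4 compm_def tab_def)
  done

lemma base4_4:
  assumes "a 0 = 1" "a 3 = 1" "a 1 = 0"
  shows "BaseOK K 4 a (tab [[0,1,1,1],[0,0,1,0],[0,0,0,0],[0,0,1,0]]) (\<lambda>i j. compm 4 a i j + tab [[0,1,1,1],[0,0,1,0],[0,0,0,0],[0,0,1,0]] i j)"
  using assms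
  apply (cases "a 0"; cases "a 1"; cases "a 2"; cases "a 3")
  apply (simp_all add: BaseOK_def all4 mm_def sum4 compm_def tab_def)
  done

lemma base4_2:
  assumes "a 0 = 1" "a 3 = 1" "a 1 = 1" "a 2 = 0"
  shows "BaseOK K 4 a (tab [[0,0,1,0],[0,0,0,0],[0,0,0,0],[0,0,1,0]]) (\<lambda>i j. compm 4 a i j + tab [[0,0,1,0],[0,0,0,0],[0,0,0,0],[0,0,1,0]] i j)"
  using assms
  apply (cases "a 0"; cases "a 1"; cases "a 2"; cases "a 3")
  apply (simp_all add: BaseOK_def all4 mm_def sum4 compm_def tab_def)
  done

lemma base4_3:
  assumes "a 0 = 1" "a 3 = 1" "a 1 = 1" "a 2 = 1"
  shows "BaseOK K 4 a (tab [[0,1,1,1],[0,0,0,0],[0,0,1,1],[0,0,1,1]]) (\<lambda>i j. compm 4 a i j + tab [[0,1,1,1],[0,0,0,0],[0,0,1,1],[0,0,1,1]] i j)"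
  using assms
  apply (cases "a 0"; cases "a 1"; cases "a 2"; cases "a 3")
  apply (simp_all add: BaseOK_def all4 mm_def sum4 compm_def tab_def)
  done

lemma base4: "\<exists>NB DB. BaseOK K 4 a NB DB"
proof (cases "a 0 = 1 \<and> a 3 = 1")
  case False then show ?thesis using base4_1 by blast
next
  case True
  then show ?thesis
    using base4_4[of a K] base4_2[of a K] base4_3[of a K]
    by (cases "a 1"; cases "a 2") auto
qed

lemma base1: "BaseOK K 1 a (\<lambda>i j. 0) (\<lambda>i j. a 0)"
  by (cases "a 0") (simp_all add: BaseOK_def mm_def compm_def)

lemma all2: "(\<forall>i<(2::nat). P i) \<longleftrightarrow> P 0 \<and> P 1"
  by (auto simp: numeral_eq_Suc less_Suc_eq)

lemma sum2: "(\<Sum>k<(2::nat). g k) = g 0 + g 1"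
  by (simp add: numeral_eq_Suc add_ac)

lemma base2: "\<exists>NB DB. BaseOK 0 2 a NB DB"
proof (cases "a 1")
  case zero
  then have "BaseOK 0 2 a (\<lambda>i j. compm 2 a i j + (if i = j then a 0 else 0)) (\<lambda>i j. if i = j then a 0 else 0)"
    by (cases "a 0") (simp_all add: BaseOK_def all2 mm_def sum2 compm_def)
  then show ?thesis by blast
next
  case one
  then have "BaseOK 0 2 a (\<lambda>i j. if i = 0 \<and> j = 1 then a 0 else 0) (\<lambda>i j. if i = 1 then 1 else 0)"
    by (cases "a 0") (simp_all add: BaseOK_def all2 mm_def sum2 compm_def)
  then show ?thesis by blast
qed



definition gpol :: "bit poly" where "gpol = [:1,1,1:]"

lemma gpol_ne [simp]: "gpol \<noteq> 0" by (simp add: gpol_def)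
lemma degree_gpol [simp]: "degree gpol = 2" by (simp add: gpol_def)
lemma degree_gpol_pow [simp]: "degree (gpol ^ K) = 2 * K"
  by (simp add: degree_power_eq)

lemma degree_div_eq:
  fixes p q :: "bit poly"
  assumes q0: "q \<noteq> 0" and le: "degree q \<le> degree p"
  shows "degree (p div q) = degree p - degree q"
proof (cases "p = 0")
  case True then show ?thesis using le by simp
next
  case p0: False
  have eq: "p = p div q * q + p mod q" by simp
  have r: "p mod q = 0 \<or> degree (p mod q) < degree q" using degree_mod_less[OF q0] by blast
  have pq0: "p div q \<noteq> 0"
  proof
    assume "p div q = 0"
    then have "p = p mod q" using eq by simp
    then show False using r le p0 by auto
  qed
  have dm: "degree (p div q * q) = degree (p div q) + degree q" using pq0 q0 by (simp add: degree_mult_eq)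
  have "degree p = degree (p div q * q)"
  proof (cases "p mod q = 0")
    case True then show ?thesis using eq by (metis add.right_neutral)
  next
    case False
    then have "degree (p mod q) < degree (p div q * q)" using r dm by auto
    then show ?thesis using eq by (metis degree_add_eq_left)
  qed
  then show ?thesis using dm by simp
qed

lemma split_gpol:
  fixes p :: "bit poly"
  assumes "2 * K \<le> degree p"
  shows "p = gpol ^ K * (p div gpol ^ K) + p mod gpol ^ K"
    and "p mod gpol ^ K = 0 \<or> degree (p mod gpol ^ K) < 2 * K"
    and "degree (p div gpol ^ K) = degree p - 2 * K"
proof -
  show "p = gpol ^ K * (p div gpol ^ K) + p mod gpol ^ K" by (simp add: mult.commute)
  show "p mod gpol ^ K = 0 \<or> degree (p mod gpol ^ K) < 2 * K"
    using degree_mod_less[of "gpol ^ K" p] by simp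
  show "degree (p div gpol ^ K) = degree p - 2 * K"
    using degree_div_eq[of "gpol ^ K" p] assms by simp
qed

lemma base_exists:
  fixes p :: "bit poly"
  assumes dp: "degree p > 0"
  shows "\<exists>K l pb R NB DB. p = gpol ^ K * pb + R \<and> (R = 0 \<or> degree R < 2 * K) \<and>
           degree pb = l \<and> 0 < l \<and> BaseOK K l (coeff pb) NB DB"
proof -
  define d where "d = degree p"
  have "odd d \<or> d = 2 \<or> (even d \<and> d \<ge> 4)" using dp d_def by presburger
  then consider (odd) "odd d" | (two) "d = 2" | (even) "even d" "d \<ge> 4" by blast
  then show ?thesis
  proof cases
    case odd
    define K where "K = d div 2"
    have "2 * K \<le> d" "d - 2 * K = 1" using odd by (auto simp: K_def elim!: oddE)
    then show ?thesis using split_gpol[of K p] base1 d_def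
      by (intro exI[of _ K] exI[of _ 1] exI[of _ "p div gpol ^ K"] exI[of _ "p mod gpol ^ K"]) auto
  next
    case two
    obtain NB DB where "BaseOK 0 2 (coeff (p div gpol ^ 0)) NB DB" using base2 by blast
    then show ?thesis using split_gpol[of 0 p] two d_def
      by (intro exI[of _ 0] exI[of _ 2] exI[of _ "p div gpol ^ 0"] exI[of _ "p mod gpol ^ 0"]) auto
  next
    case even
    define K where "K = (d - 4) div 2"
    have "2 * K \<le> d" "d - 2 * K = 4" using even by (auto simp: K_def elim!: evenE)
    moreover obtain NB DB where "BaseOK K 4 (coeff (p div gpol ^ K)) NB DB" using base4 by blast
    ultimately show ?thesis using split_gpol[of K p] d_def
      by (intro exI[of _ K] exI[of _ 4] exI[of _ "p div gpol ^ K"] exI[of _ "p mod gpol ^ K"]) auto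
  qed
qed



lemma bitpoly_add_self [simp]: "(p::bit poly) + p = 0"
  by (rule poly_eqI) (simp only: coeff_add bit_add_self coeff_0)

lemma bitpoly_add_self2 [simp]: "(p::bit poly) + (p + q) = q"
  by (simp add: add.assoc[symmetric])

lemma sub_subspace:
  fixes S :: "(bit^'n) set"
  assumes "0 \<in> S" "\<And>x y. x \<in> S \<Longrightarrow> y \<in> S \<Longrightarrow> x + y \<in> S"
  shows "vec.subspace S"
  unfolding vec.subspace_def using assms by (auto simp: bit_scale_cases)

lemma span_prop:
  fixes B :: "(bit^'n) set"
  assumes "P 0" "\<And>x y. P x \<Longrightarrow> P y \<Longrightarrow> P (x + y)" "\<And>b. b \<in> B \<Longrightarrow> P b"
    and "x \<in> vec.span B"
  shows "P x"
proof -
  have "vec.subspace {x. P x}" by (rule sub_subspace) (use assms in auto)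
  then have "vec.span B \<subseteq> {x. P x}" using assms(3) by (intro vec.span_minimal) auto
  then show ?thesis using assms(4) by blast
qed

definition Xp :: "bit poly" where "Xp = [:0, 1:]"

lemma Xp_sq: "Xp * Xp = gpol + Xp + 1"
  by (simp add: Xp_def gpol_def one_pCons)

lemma Xp_ne [simp]: "Xp \<noteq> 0" by (simp add: Xp_def)
lemma degree_Xp_pow [simp]: "degree (Xp ^ i) = i" by (simp add: Xp_def degree_linear_power)

definition ev :: "nat \<Rightarrow> nat \<Rightarrow> bit poly" where
  "ev K s = (if s < 2 * K then Xp ^ (s mod 2) * gpol ^ (s div 2) else Xp ^ (s - 2 * K) * gpol ^ K)"

lemma ev_ne [simp]: "ev K s \<noteq> 0"
  by (simp add: ev_def)

lemma degree_ev [simp]: "degree (ev K s) = s"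
  by (simp add: ev_def degree_mult_eq)

lemma coeff_ev_top [simp]: "coeff (ev K s) s = 1"
  using poly_bit_lead[of "ev K s"] by simp

lemma comb0:
  assumes "(\<Sum>s<n. smult (c s) (ev K s)) = 0" "s < n"
  shows "c s = 0"
  using assms
proof (induct n arbitrary: s)
  case 0 then show ?case by simp
next
  case (Suc n)
  have co: "coeff (\<Sum>s<n. smult (c s) (ev K s)) n = 0"
    by (simp add: coeff_sum coeff_eq_0)
  have "coeff (\<Sum>s<Suc n. smult (c s) (ev K s)) n = coeff (\<Sum>s<n. smult (c s) (ev K s)) n + c n * 1"
    by (simp only: sum.lessThan_Suc coeff_add coeff_smult coeff_ev_top)
  then have "coeff (\<Sum>s<Suc n. smult (c s) (ev K s)) n = c n" by (simp only: co add_0 mult_1_right)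
  then have cn: "c n = 0" by (metis Suc.prems(1) coeff_0)
  then have "(\<Sum>s<n. smult (c s) (ev K s)) = 0" using Suc.prems by simp
  then show ?case using Suc cn by (cases "s = n") auto
qed

lemma tri:
  fixes h :: "bit poly"
  shows "h = 0 \<or> degree h < n \<Longrightarrow> \<exists>c. h = (\<Sum>s<n. smult (c s) (ev K s))"
proof (induct n arbitrary: h)
  case 0 then show ?case by simp
next
  case (Suc n)
  define a where "a = coeff h n"
  define h' where "h' = h + smult a (ev K n)"
  have "coeff h' n = 0" by (simp add: h'_def a_def)
  moreover have "degree h' \<le> n" unfolding h'_def using Suc.prems
    by (intro degree_add_le) (auto simp: degree_smult_le[THEN order.trans])
  ultimately have "h' = 0 \<or> degree h' < n"
    by (metis le_neq_implies_less leading_coeff_0_iff)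
  then obtain c where c: "h' = (\<Sum>s<n. smult (c s) (ev K s))" using Suc.hyps by blast
  have "h = h' + smult a (ev K n)" by (simp add: h'_def add.assoc)
  also have "\<dots> = (\<Sum>s<Suc n. smult ((c(n := a)) s) (ev K s))"
    by (simp add: c)
  finally show ?case by blast
qed

lemma Xe_even:
  assumes "s < 2 * K" "even s"
  shows "Xp * ev K s = ev K (Suc s)"
proof -
  have "Suc s < 2 * K" using assms by presburger
  moreover have "s mod 2 = 0" "Suc s mod 2 = 1" "Suc s div 2 = s div 2" using assms by presburger+
  ultimately show ?thesis using assms by (simp add: ev_def)
qed

lemma Xe_odd:
  assumes "s < 2 * K" "odd s"
  shows "Xp * ev K s = ev K (Suc s) + ev K s + ev K (s - 1)"
proof -
  define j where "j = s div 2"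
  have sj: "s = 2 * j + 1" using assms by (simp add: j_def)
  have es: "ev K s = Xp * gpol ^ j" using assms sj by (simp add: ev_def)
  have es1: "ev K (s - 1) = gpol ^ j" using assms sj by (simp add: ev_def)
  have es2: "ev K (Suc s) = gpol ^ Suc j"
  proof (cases "Suc s < 2 * K")
    case True then show ?thesis using sj by (simp add: ev_def)
  next
    case False
    then have "K = Suc j" using assms sj by linarith
    then show ?thesis using sj by (simp add: ev_def)
  qed
  have "Xp * ev K s = (Xp * Xp) * gpol ^ j" by (simp add: es mult.assoc)
  also have "\<dots> = gpol ^ Suc j + Xp * gpol ^ j + gpol ^ j" by (simp add: Xp_sq algebra_simps)
  also have "\<dots> = ev K (Suc s) + ev K s + ev K (s - 1)" by (simp only: es es1 es2 power_Suc)
  finally show ?thesis .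
qed

lemma Xe_top:
  assumes "2 * K \<le> s"
  shows "Xp * ev K s = ev K (Suc s)"
  using assms by (simp add: ev_def Suc_diff_le mult.assoc)

definition mv :: "nat \<Rightarrow> (nat \<Rightarrow> nat \<Rightarrow> bit) \<Rightarrow> (nat \<Rightarrow> bit) \<Rightarrow> nat \<Rightarrow> bit" where
  "mv l M u i = (\<Sum>j<l. M i j * u j)"

lemma mv_mm: "mv l (mm l A B) u i = mv l A (mv l B u) i"
  unfolding mv_def mm_def
  by (simp only: sum_distrib_right sum_distrib_left mult.assoc) (rule sum.swap)

lemma mv_mm_fun: "mv l (mm l A B) u = mv l A (mv l B u)"
  by (rule ext) (rule mv_mm)

lemma mv_cong: "(\<And>j. j < l \<Longrightarrow> u j = w j) \<Longrightarrow> mv l M u i = mv l M w i"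
  unfolding mv_def by (intro sum.cong) auto

lemma mv_cong_M: "(\<And>j. j < l \<Longrightarrow> M i j = M' i j) \<Longrightarrow> mv l M u i = mv l M' u i"
  unfolding mv_def by (intro sum.cong) auto

lemma sum_scale_swap:
  fixes w :: "nat \<Rightarrow> bit^'n"
  shows "(\<Sum>j<l. u j *s (\<Sum>i<l. M i j *s w i)) = (\<Sum>i<l. (\<Sum>j<l. M i j * u j) *s w i)"
proof -
  have "(\<Sum>j<l. u j *s (\<Sum>i<l. M i j *s w i)) = (\<Sum>j<l. \<Sum>i<l. (M i j * u j) *s w i)"
    by (simp only: vec.scale_sum_right vector_smult_assoc mult.commute)
  also have "\<dots> = (\<Sum>i<l. \<Sum>j<l. (M i j * u j) *s w i)" by (rule sum.swap)
  also have "\<dots> = (\<Sum>i<l. (\<Sum>j<l. M i j * u j) *s w i)"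
    by (simp only: vec.scale_sum_left)
  finally show ?thesis .
qed

lemma sum_delta_vec:
  fixes w :: "nat \<Rightarrow> bit^'n"
  assumes "k < l"
  shows "(\<Sum>i<l. (if i = k then 1 else 0) *s w i) = w k"
proof -
  have "(\<Sum>i<l. (if i = k then 1 else 0) *s w i) = (\<Sum>i<l. if i = k then w i else 0)"
    by (intro sum.cong) auto
  also have "\<dots> = w k" using assms by (simp add: sum.delta)
  finally show ?thesis .
qed

lemma CYC_core:
  fixes f :: "bit^'n \<Rightarrow> bit^'n" and v :: "bit^'n" and p pb R :: "bit poly"
  assumes lf: "lin f" and pv: "peval p f v = 0"
    and CI: "\<And>h. h \<noteq> 0 \<Longrightarrow> degree h < degree p \<Longrightarrow> peval h f v \<noteq> 0"
    and pdec: "p = gpol ^ K * pb + R" and Rdeg: "R = 0 \<or> degree R < 2 * K"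
    and dpb: "degree pb = l" and l0: "0 < l" and base: "BaseOK K l (coeff pb) NB DB"
  shows "DEC f {peval h f v | h. degree h < degree p}"
proof -
  note pz[simp] = peval_zero_x[OF lf] peval_1[OF lf]
  define d where "d = degree p"
  have pb0: "pb \<noteq> 0" using dpb l0 by auto
  have dd: "d = 2 * K + l"
  proof -
    have dg: "degree (gpol ^ K * pb) = 2 * K + l" using pb0 dpb by (simp add: degree_mult_eq)
    show ?thesis
    proof (cases "R = 0")
      case True then show ?thesis using dg pdec d_def by simp
    next
      case False
      then have "degree R < degree (gpol ^ K * pb)" using Rdeg dg by simp
      then show ?thesis using dg pdec d_def by (simp add: degree_add_eq_left)
    qed
  qed
  define bv where "bv s = peval (ev K s) f v" for s
  define B where "B = bv ` {..<d}"
  have comb_eval: "(\<Sum>s\<in>S. c s *s bv s) = peval (\<Sum>s\<in>S. smult (c s) (ev K s)) f v" for S c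
    by (simp add: bv_def peval_sum_poly[OF lf] peval_smult[OF lf])
  have deg_comb: "degree (\<Sum>s<n. smult (c s) (ev K s)) < n" if "0 < n" for n c
    using that by (intro degree_sum_less) (auto intro: le_less_trans[OF degree_smult_le])
  have bv_inj: "inj_on bv {..<d}"
  proof (rule inj_onI)
    fix s t assume st: "s \<in> {..<d}" "t \<in> {..<d}" "bv s = bv t"
    show "s = t"
    proof (rule ccontr)
      assume nst: "s \<noteq> t"
      define H where "H = ev K s + ev K t"
      have "coeff H (max s t) = 1"
        using nst by (cases "s < t") (auto simp: H_def coeff_eq_0 max_def)
      then have "H \<noteq> 0" by auto
      moreover have "degree H < d" unfolding H_def using st by (intro degree_add_less) auto
      moreover have "peval H f v = 0" using st by (simp add: H_def peval_add[OF lf] bv_def[symmetric])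
      ultimately show False using CI d_def by blast
    qed
  qed
  have indB: "vec.independent B"
  proof (rule vec.independent_if_scalars_zero)
    show "finite B" by (simp add: B_def)
    fix c x assume sum0: "(\<Sum>x\<in>B. c x *s x) = 0" and xB: "x \<in> B"
    have "(\<Sum>x\<in>B. c x *s x) = (\<Sum>s<d. c (bv s) *s bv s)"
      unfolding B_def by (rule sum.reindex[OF bv_inj, unfolded comp_def])
    also have "\<dots> = peval (\<Sum>s<d. smult (c (bv s)) (ev K s)) f v" by (rule comb_eval)
    finally have H0: "peval (\<Sum>s<d. smult (c (bv s)) (ev K s)) f v = 0" using sum0 by simp
    have dl: "degree (\<Sum>s<d. smult (c (bv s)) (ev K s)) < degree p"
      using deg_comb[of d "\<lambda>s. c (bv s)"] dd l0 d_def by simp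
    have "(\<Sum>s<d. smult (c (bv s)) (ev K s)) = 0"
      using CI[OF _ dl] H0 by blast
    moreover obtain s where s: "s < d" "x = bv s" using xB B_def by auto
    ultimately show "c x = 0" using comb0[of "\<lambda>s. c (bv s)"] by blast
  qed
  define Z where "Z = {peval h f v | h. degree h < d}"
  have Zsub: "vec.subspace Z"
  proof (rule sub_subspace)
    show "0 \<in> Z" unfolding Z_def using dd l0 by (intro CollectI exI[of _ 0]) simp
    fix x y assume "x \<in> Z" "y \<in> Z"
    then obtain h1 h2 where "x = peval h1 f v" "degree h1 < d" "y = peval h2 f v" "degree h2 < d"
      unfolding Z_def by blast
    then show "x + y \<in> Z" unfolding Z_def
      by (intro CollectI exI[of _ "h1 + h2"]) (simp add: peval_add[OF lf] degree_add_less)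
  qed
  have ZB: "Z = vec.span B"
  proof
    show "Z \<subseteq> vec.span B"
    proof
      fix x assume "x \<in> Z"
      then obtain h where h: "x = peval h f v" "degree h < d" unfolding Z_def by blast
      obtain c where c: "h = (\<Sum>s<d. smult (c s) (ev K s))" using tri[of h d K] h(2) by blast
      have "x = (\<Sum>s<d. c s *s bv s)" using h(1) c comb_eval by simp
      also have "\<dots> \<in> vec.span B" unfolding B_def
        by (intro vec.span_sum vec.span_scale vec.span_base) auto
      finally show "x \<in> vec.span B" .
    qed
    show "vec.span B \<subseteq> Z"
    proof (rule vec.span_minimal[OF _ Zsub])
      show "B \<subseteq> Z" unfolding B_def Z_def bv_def by auto
    qed
  qed
  define y where "y = peval R f v"
  define cv where "cv i = bv (2 * K + i)" for i
  define Nval where "Nval s = (if s < 2 * K then (if even s then 0 else bv (Suc s))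
      else (\<Sum>i<l. NB i (s - 2 * K) *s cv i))" for s
  define Dval where "Dval s = (if s < 2 * K then (if even s then bv (Suc s) else bv (s - 1) + bv s)
      else (\<Sum>i<l. DB i (s - 2 * K) *s cv i) + (if s = d - 1 then y else 0))" for s
  define idx where "idx b = (THE s. s < d \<and> bv s = b)" for b
  have idx: "idx (bv s) = s" if "s < d" for s
    unfolding idx_def using that bv_inj by (intro the_equality) (auto dest: inj_onD)
  define N where "N = vec.construct B (\<lambda>b. Nval (idx b))"
  define D where "D = vec.construct B (\<lambda>b. Dval (idx b))"
  have linN: "lin N" unfolding N_def by (rule vec.linear_construct[OF indB])
  have linD: "lin D" unfolding D_def by (rule vec.linear_construct[OF indB])
  have Nbv: "N (bv s) = Nval s" if "s < d" for s
    unfolding N_def using that by (subst vec.construct_basis[OF indB]) (auto simp: B_def idx)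
  have Dbv: "D (bv s) = Dval s" if "s < d" for s
    unfolding D_def using that by (subst vec.construct_basis[OF indB]) (auto simp: B_def idx)
  have fbv: "f (bv s) = peval (Xp * ev K s) f v" for s
    unfolding bv_def Xp_def by (rule peval_X_mult[OF lf, symmetric])
  have Ncv: "N (cv i) = (\<Sum>k<l. NB k i *s cv k)" if "i < l" for i
    using that dd by (simp add: cv_def Nbv Nval_def)
  have Dcv: "D (cv i) = (\<Sum>k<l. DB k i *s cv k) + (if i = l - 1 then y else 0)" if "i < l" for i
  proof -
    have "2 * K + i = d - 1 \<longleftrightarrow> i = l - 1" using that dd l0 by auto
    then show ?thesis using that dd by (simp add: cv_def Dbv Dval_def)
  qed
  have b1: "\<And>i j. i < l \<Longrightarrow> j < l \<Longrightarrow> NB i j + DB i j = compm l (coeff pb) i j"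
    and b2: "\<And>i j. i < l \<Longrightarrow> j < l \<Longrightarrow> mm l NB NB i j = 0"
    and b3: "\<And>i j. i < l \<Longrightarrow> j < l \<Longrightarrow> mm l DB (mm l DB (mm l DB DB)) i j = DB i j"
    and b4: "0 < K \<Longrightarrow> (\<forall>i<l. NB i 0 = 0) \<and> (\<forall>j<l. mm l DB DB (l - 1) j = DB (l - 1) j)"
    using base unfolding BaseOK_def by auto
  have ND_sum: "Nval (2 * K + j) + Dval (2 * K + j) =
      (\<Sum>i<l. compm l (coeff pb) i j *s cv i) + (if 2 * K + j = d - 1 then y else 0)" if "j < l" for j
  proof -
    have "Nval (2 * K + j) + Dval (2 * K + j) =
      ((\<Sum>i<l. NB i j *s cv i) + (\<Sum>i<l. DB i j *s cv i)) + (if 2 * K + j = d - 1 then y else 0)"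
      by (simp add: Nval_def Dval_def add.assoc)
    also have "(\<Sum>i<l. NB i j *s cv i) + (\<Sum>i<l. DB i j *s cv i) = (\<Sum>i<l. compm l (coeff pb) i j *s cv i)"
      by (simp only: sum.distrib[symmetric] vector_sadd_rdistrib[symmetric]) (intro sum.cong refl, simp only: lessThan_iff b1 that)
    finally show ?thesis .
  qed
  have top: "peval (Xp * ev K (d - 1)) f v = (\<Sum>i<l. coeff pb i *s cv i) + y"
  proof -
    have "\<not> d - 1 < 2 * K" "d - 1 - 2 * K = l - 1" using dd l0 by auto
    then have "ev K (d - 1) = Xp ^ (l - 1) * gpol ^ K" by (simp add: ev_def)
    moreover have "Xp * Xp ^ (l - 1) = Xp ^ l" using l0 by (simp add: power_Suc[symmetric])
    ultimately have e1: "Xp * ev K (d - 1) = Xp ^ l * gpol ^ K" by (simp add: mult.assoc[symmetric])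
    have e2: "Xp ^ l * gpol ^ K = gpol ^ K * (Xp ^ l + pb) + p + R"
      by (simp add: pdec algebra_simps)
    have e3: "Xp ^ l + pb = (\<Sum>i<l. monom (coeff pb i) i)"
    proof -
      have "pb = (\<Sum>i\<le>l. monom (coeff pb i) i)" using poly_as_sum_of_monoms[of pb] dpb by simp
      also have "\<dots> = (\<Sum>i<l. monom (coeff pb i) i) + monom 1 l"
        using poly_bit_lead[OF pb0] dpb by (simp add: lessThan_Suc_atMost[symmetric])
      finally have "pb = (\<Sum>i<l. monom (coeff pb i) i) + Xp ^ l"
        by (simp add: monom_altdef Xp_def)
      then show ?thesis by (metis add.commute bitpoly_add_self2)
    qed
    have e4: "gpol ^ K * monom c i = smult c (ev K (2 * K + i))" for c i
      by (simp add: ev_def monom_altdef Xp_def mult.commute)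
    have "peval (Xp * ev K (d - 1)) f v = peval (gpol ^ K * (Xp ^ l + pb)) f v + peval p f v + y"
      unfolding e1 e2 y_def by (simp only: peval_add[OF lf])
    also have "peval (gpol ^ K * (Xp ^ l + pb)) f v = (\<Sum>i<l. coeff pb i *s cv i)"
      by (simp add: e3 sum_distrib_left e4 peval_sum_poly[OF lf] peval_smult[OF lf] cv_def bv_def)
    finally show ?thesis using pv by simp
  qed
  have A_ok: "f (bv s) = Nval s + Dval s" if sd: "s < d" for s
  proof -
    consider (ev) "s < 2 * K" "even s" | (od) "s < 2 * K" "odd s" | (hi) "2 * K \<le> s" "s < d - 1"
      | (last) "s = d - 1" using sd by linarith
    then show ?thesis
    proof cases
      case ev
      have "f (bv s) = peval (ev K (Suc s)) f v" by (simp only: fbv Xe_even[OF ev])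
      then have "f (bv s) = bv (Suc s)" by (simp only: bv_def)
      then show ?thesis using ev by (simp add: Nval_def Dval_def)
    next
      case od
      have "f (bv s) = peval (ev K (Suc s) + ev K s + ev K (s - 1)) f v" by (simp only: fbv Xe_odd[OF od])
      then have "f (bv s) = bv (Suc s) + bv s + bv (s - 1)"
        by (simp only: bv_def peval_add[OF lf])
      then show ?thesis using od by (simp add: Nval_def Dval_def add_ac)
    next
      case hi
      define j where "j = s - 2 * K"
      have j: "s = 2 * K + j" "j + 1 < l" using hi dd by (auto simp: j_def)
      have "f (bv s) = peval (ev K (Suc s)) f v" by (simp only: fbv Xe_top[OF hi(1)])
      then have "f (bv s) = cv (j + 1)" using j by (simp add: bv_def cv_def)
      also have "\<dots> = (\<Sum>i<l. compm l (coeff pb) i j *s cv i)"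
        using j by (simp add: compm_def sum_delta_vec)
      also have "\<dots> = Nval s + Dval s" using ND_sum[of j] j hi by simp
      finally show ?thesis .
    next
      case last
      have sl: "s = 2 * K + (l - 1)" "l - 1 < l" using last dd l0 by auto
      have "f (bv s) = (\<Sum>i<l. coeff pb i *s cv i) + y" using top last by (simp only: fbv)
      also have "(\<Sum>i<l. coeff pb i *s cv i) = (\<Sum>i<l. compm l (coeff pb) i (l - 1) *s cv i)"
        using l0 by (intro sum.cong refl) (simp add: compm_def)
      also have "(\<Sum>i<l. compm l (coeff pb) i (l - 1) *s cv i) + y = Nval s + Dval s"
        using ND_sum[OF sl(2)] sl(1) last by simp
      finally show ?thesis .
    qed
  qed
  have NN_ok: "N (Nval s) = 0" if sd: "s < d" for s
  proof -
    consider (ev) "s < 2 * K" "even s" | (od) "s < 2 * K" "odd s" | (hi) "2 * K \<le> s"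
      using sd by linarith
    then show ?thesis
    proof cases
      case ev then show ?thesis by (simp add: Nval_def lin_0[OF linN])
    next
      case od
      have s1: "Suc s < d" using od dd l0 by simp
      have "N (Nval s) = Nval (Suc s)" using od s1 by (simp add: Nval_def Nbv)
      also have "\<dots> = 0"
      proof (cases "Suc s < 2 * K")
        case True then show ?thesis using od by (simp add: Nval_def)
      next
        case False
        then have "Suc s = 2 * K" using od by simp
        moreover have "\<forall>i<l. NB i 0 = 0" using b4 od by simp
        ultimately show ?thesis by (simp add: Nval_def)
      qed
      finally show ?thesis .
    next
      case hi
      define j where "j = s - 2 * K"
      have j: "j < l" using hi sd dd by (simp add: j_def)
      have "N (Nval s) = (\<Sum>i<l. NB i j *s N (cv i))"
        using hi by (simp add: Nval_def j_def lin_sum[OF linN] lin_scale[OF linN])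
      also have "\<dots> = (\<Sum>i<l. NB i j *s (\<Sum>k<l. NB k i *s cv k))"
        by (intro sum.cong refl) (simp add: Ncv)
      also have "\<dots> = (\<Sum>k<l. (\<Sum>i<l. NB k i * NB i j) *s cv k)" by (rule sum_scale_swap)
      also have "\<dots> = 0"
        using b2[OF _ j] by (intro sum.neutral) (simp add: mm_def)
      finally show ?thesis .
    qed
  qed
  define Lsp where "Lsp = vec.span (bv ` {..<2 * K})"
  have Dlow: "D (D (D (bv s))) = bv s \<and> D (D (bv s)) = D (bv s) + bv s" if s: "s < 2 * K" for s
  proof (cases "even s")
    case True
    have s1: "Suc s < 2 * K" "odd (Suc s)" using s True by presburger+
    have "D (bv s) = bv (Suc s)" using s True dd by (simp add: Dbv Dval_def)
    moreover have "D (bv (Suc s)) = bv s + bv (Suc s)" using s1 dd by (simp add: Dbv Dval_def)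
    ultimately show ?thesis by (simp add: lin_add[OF linD] add_ac)
  next
    case False
    have s1: "s - 1 < 2 * K" "even (s - 1)" "Suc (s - 1) = s" using s False by presburger+
    have "D (bv s) = bv (s - 1) + bv s" using s False dd by (simp add: Dbv Dval_def)
    moreover have "D (bv (s - 1)) = bv s" using s1 dd Dbv[of "s - 1"] by (simp add: Dval_def)
    ultimately show ?thesis by (simp add: lin_add[OF linD] add_ac)
  qed
  have Lprop: "D (D (D z)) = z \<and> D (D z) = D z + z" if "z \<in> Lsp" for z
    using that unfolding Lsp_def
    by (rule span_prop[where P = "\<lambda>z. D (D (D z)) = z \<and> D (D z) = D z + z", rotated 3])
       (auto simp: lin_0[OF linD] lin_add[OF linD] add_ac Dlow)
  have LB: "Lsp \<subseteq> vec.span B" unfolding Lsp_def B_def using dd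
    by (intro vec.span_mono image_mono) auto
  have yL: "y \<in> Lsp"
  proof (cases "R = 0")
    case True then show ?thesis by (simp add: y_def Lsp_def vec.span_zero)
  next
    case False
    then have "degree R < 2 * K" using Rdeg by simp
    then obtain c where c: "R = (\<Sum>s<2 * K. smult (c s) (ev K s))" using tri[of R "2 * K" K] by blast
    have "y = (\<Sum>s<2 * K. c s *s bv s)" using c comb_eval by (simp add: y_def)
    also have "\<dots> \<in> Lsp" unfolding Lsp_def
      by (intro vec.span_sum vec.span_scale vec.span_base) auto
    finally show ?thesis .
  qed
  define cvec where "cvec u = (\<Sum>i<l. u i *s cv i)" for u
  have cvec_cong: "cvec u = cvec w" if "\<And>i. i < l \<Longrightarrow> u i = w i" for u w
    unfolding cvec_def using that by (intro sum.cong) auto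
  define M where "M u = mv l DB u" for u
  define L where "L = l - 1"
  have Lh: "L < l" using l0 by (simp add: L_def)
  have Dcvec: "D (cvec u) = cvec (M u) + u L *s y" for u
  proof -
    have "D (cvec u) = (\<Sum>j<l. u j *s D (cv j))"
      by (simp add: cvec_def lin_sum[OF linD] lin_scale[OF linD])
    also have "\<dots> = (\<Sum>j<l. u j *s (\<Sum>k<l. DB k j *s cv k) + (if j = L then u j *s y else 0))"
      by (intro sum.cong refl) (simp add: Dcv L_def vector_add_ldistrib)
    also have "\<dots> = (\<Sum>j<l. u j *s (\<Sum>k<l. DB k j *s cv k)) + u L *s y"
      using Lh by (simp add: sum.distrib sum.delta)
    also have "(\<Sum>j<l. u j *s (\<Sum>k<l. DB k j *s cv k)) = cvec (M u)"
      unfolding sum_scale_swap cvec_def M_def mv_def ..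
    finally show ?thesis .
  qed
  have M4: "cvec (M (M (M (M u)))) = cvec (M u)" for u
  proof (rule cvec_cong)
    fix i assume i: "i < l"
    have "M (M (M (M u))) i = mv l (mm l DB (mm l DB (mm l DB DB))) u i"
      by (simp add: M_def mv_mm_fun)
    also have "\<dots> = mv l DB u i" using b3[OF i] by (intro mv_cong_M) simp
    finally show "M (M (M (M u))) i = M u i" by (simp add: M_def)
  qed
  have D4cvec: "D (D (D (D (cvec u)))) = D (cvec u)" for u
  proof (cases "K = 0")
    case True
    then have "R = 0" using Rdeg by simp
    then have y0: "y = 0" by (simp add: y_def)
    then have "\<And>w. D (cvec w) = cvec (M w)" using Dcvec by simp
    then show ?thesis using M4 by simp
  next
    case False
    then have b4': "\<And>j. j < l \<Longrightarrow> mm l DB DB L j = DB L j" using b4 by (simp add: L_def)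
    have M2: "M (M w) L = M w L" for w
    proof -
      have "M (M w) L = mv l (mm l DB DB) w L" by (simp add: M_def mv_mm_fun)
      also have "\<dots> = mv l DB w L" using b4' by (intro mv_cong_M) simp
      finally show ?thesis by (simp add: M_def)
    qed
    have M3: "M (M (M u)) L = M u L" using M2[of "M u"] M2[of u] by simp
    have yy: "D (D (D y)) = y" "D (D y) = D y + y" using Lprop[OF yL] by auto
    have "D (D (D (D (cvec u)))) = cvec (M (M (M (M u)))) + M (M (M u)) L *s y + M (M u) L *s D y
        + M u L *s D (D y) + u L *s D (D (D y))"
      by (simp add: Dcvec lin_add[OF linD] lin_scale[OF linD] add_ac)
    also have "\<dots> = cvec (M u) + u L *s y"
      by (simp add: M4 M3 M2 yy lin_add[OF linD] vector_add_ldistrib add_ac)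
    also have "\<dots> = D (cvec u)" by (simp add: Dcvec)
    finally show ?thesis .
  qed
  have D3_ok: "D (D (D (Dval s))) = Dval s" if sd: "s < d" for s
  proof (cases "s < 2 * K")
    case True
    have inL: "bv t \<in> Lsp" if "t < 2 * K" for t
      unfolding Lsp_def using that by (intro vec.span_base) auto
    have "Dval s \<in> Lsp"
    proof (cases "even s")
      case True
      then have "Suc s < 2 * K" using \<open>s < 2 * K\<close> by presburger
      then show ?thesis using True \<open>s < 2 * K\<close> inL by (simp add: Dval_def)
    next
      case False
      then show ?thesis using \<open>s < 2 * K\<close> inL
        by (simp add: Dval_def Lsp_def vec.span_add)
    qed
    then show ?thesis using Lprop by blast
  next
    case False
    define j where "j = s - 2 * K"
    have j: "j < l" "s = 2 * K + j" using False sd dd by (auto simp: j_def)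
    have "cv j = cvec (\<lambda>i. if i = j then 1 else 0)"
      unfolding cvec_def using sum_delta_vec[OF j(1), of cv] by simp
    then have "Dval s = D (cvec (\<lambda>i. if i = j then 1 else 0))"
      using j sd by (simp add: Dbv[symmetric] cv_def)
    then show ?thesis using D4cvec by simp
  qed
  have bvB: "bv t \<in> vec.span B" if "t < d" for t
    unfolding B_def using that by (intro vec.span_base) auto
  have cvB: "cv i \<in> vec.span B" if "i < l" for i
    unfolding cv_def using that dd by (intro bvB) simp
  have NvalB: "Nval s \<in> vec.span B" if "s < d" for s
    using that dd l0 bvB cvB
    by (auto simp: Nval_def intro!: vec.span_sum vec.span_scale vec.span_zero)
  have DvalB: "Dval s \<in> vec.span B" if "s < d" for s
    using that dd l0 bvB cvB yL LB
    by (auto simp: Dval_def intro!: vec.span_sum vec.span_scale vec.span_zero vec.span_add)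
  have ZB': "Z = {peval h f v | h. degree h < degree p}" by (simp add: Z_def d_def)
  have props: "N x \<in> Z \<and> D x \<in> Z \<and> f x = N x + D x \<and> N (N x) = 0 \<and> D (D (D (D x))) = D x"
    if xZ: "x \<in> Z" for x
  proof -
    have xB: "x \<in> vec.span B" using xZ ZB by simp
    have "N x \<in> vec.span B"
      by (rule span_prop[where P = "\<lambda>x. N x \<in> vec.span B", OF _ _ _ xB])
         (auto simp: lin_0[OF linN] lin_add[OF linN] vec.span_zero vec.span_add B_def Nbv NvalB[unfolded B_def])
    moreover have "D x \<in> vec.span B"
      by (rule span_prop[where P = "\<lambda>x. D x \<in> vec.span B", OF _ _ _ xB])
         (auto simp: lin_0[OF linD] lin_add[OF linD] vec.span_zero vec.span_add B_def Dbv DvalB[unfolded B_def])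
    moreover have "f x = N x + D x"
      by (rule span_prop[where P = "\<lambda>x. f x = N x + D x", OF _ _ _ xB])
         (auto simp: lin_0[OF linD] lin_add[OF linD] lin_0[OF linN] lin_add[OF linN]
            lin_0[OF lf] lin_add[OF lf] add_ac B_def Nbv Dbv A_ok)
    moreover have "N (N x) = 0"
      by (rule span_prop[where P = "\<lambda>x. N (N x) = 0", OF _ _ _ xB])
         (auto simp: lin_0[OF linN] lin_add[OF linN] B_def Nbv NN_ok)
    moreover have "D (D (D (D x))) = D x"
      by (rule span_prop[where P = "\<lambda>x. D (D (D (D x))) = D x", OF _ _ _ xB])
         (auto simp: lin_0[OF linD] lin_add[OF linD] B_def Dbv D3_ok)
    ultimately show ?thesis using ZB by simp
  qed
  show ?thesis unfolding DEC_def ZB'[symmetric]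
    using props lin_add[OF linN] lin_add[OF linD] by blast
qed

lemma CYC:
  fixes f :: "bit^'n \<Rightarrow> bit^'n"
  assumes lf: "lin f" and p0: "degree p > 0" and pv: "peval p f v = 0"
    and CI: "\<And>h. h \<noteq> 0 \<Longrightarrow> degree h < degree p \<Longrightarrow> peval h f v \<noteq> 0"
  shows "DEC f {peval h f v | h. degree h < degree p}"
proof -
  obtain K l pb R NB DB where "p = gpol ^ K * pb + R" "R = 0 \<or> degree R < 2 * K"
      "degree pb = l" "0 < l" "BaseOK K l (coeff pb) NB DB"
    using base_exists[OF p0] by blast
  then show ?thesis using CYC_core[OF lf pv CI] by blast
qed

lemma pow_monom_degree_lt:
  fixes p :: "bit poly"
  assumes "degree p = d" "d > 0"
  shows "degree (monom 1 d + p) < d"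
proof (rule ccontr)
  assume "\<not> degree (monom 1 d + p) < d"
  moreover have "degree (monom 1 d + p) \<le> d"
    using assms by (intro degree_add_le) (simp_all add: degree_monom_le)
  ultimately have e: "degree (monom 1 d + p) = d" by simp
  have "p \<noteq> 0" using assms by auto
  then have "coeff p d = 1" using assms poly_bit_lead by blast
  then have "coeff (monom 1 d + p) d = 0" by simp
  then have "monom 1 d + p = 0" using e leading_coeff_0_iff by metis
  then show False using e assms by simp
qed

lemma DEC_pp:
  fixes f :: "bit^'n \<Rightarrow> bit^'n" and q :: "bit poly"
  assumes lf: "lin f" and pr: "prime q"
  shows "sub W \<Longrightarrow> f ` W \<subseteq> W \<Longrightarrow> (\<forall>x\<in>W. peval (q ^ e) f x = 0) \<Longrightarrow> DEC f W"
proof (induct "card W" arbitrary: W rule: less_induct)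
  case less
  note pz [simp] = peval_zero_x[OF lf] peval_1[OF lf]
  note W = less.prems(1) and inv = less.prems(2) and ann = less.prems(3)
  show ?case
  proof (cases "W \<subseteq> {0}")
    case True
    then have "W = {0}" using W by (auto simp: sub_def)
    then show ?thesis using DEC_zero[OF lf] by simp
  next
    case False
    then obtain w0 where w0: "w0 \<in> W" "w0 \<noteq> 0" by blast
    define k where "k = (LEAST k. \<forall>x\<in>W. peval (q ^ k) f x = 0)"
    have kann: "\<forall>x\<in>W. peval (q ^ k) f x = 0"
      unfolding k_def using ann by (rule LeastI)
    have "k \<noteq> 0"
    proof
      assume "k = 0"
      then have "peval (q ^ k) f w0 = w0" by (simp add: peval_1[OF lf])
      then show False using kann w0 by auto
    qed
    then obtain k' where kk: "k = Suc k'" using not0_implies_Suc by blast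
    have "\<not> (\<forall>x\<in>W. peval (q ^ k') f x = 0)"
      using not_less_Least[of k' "\<lambda>k. \<forall>x\<in>W. peval (q ^ k) f x = 0"] kk k_def by simp
    then obtain v where v: "v \<in> W" "peval (q ^ k') f v \<noteq> 0" by blast
    define p where "p = q ^ k"
    define d where "d = degree p"
    have q0: "q \<noteq> 0" using pr by auto
    have qnu: "\<not> is_unit q" using pr not_prime_unit by blast
    have dpos: "d > 0" unfolding d_def p_def
      using prime_degree_pos[OF pr] kk q0 degree_power_eq[OF q0, of k] by simp
    have pv: "peval p f v = 0" using kann v by (simp add: p_def)
    have CI: "peval h f v \<noteq> 0" if h0: "h \<noteq> 0" and hd: "degree h < d" for h
    proof
      assume hv: "peval h f v = 0"
      obtain h' where h': "h = q ^ multiplicity q h * h'" "\<not> q dvd h'"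
        using multiplicity_decompose'[OF h0 qnu] by blast
      define j where "j = multiplicity q h"
      have hj: "h = q ^ j * h'" unfolding j_def by (rule h'(1))
      have jk: "j < k"
      proof (rule ccontr)
        assume "\<not> j < k"
        then have "q ^ k dvd h" unfolding j_def using multiplicity_dvd' by (metis not_less)
        then have "degree p \<le> degree h" using dvd_imp_degree_le h0 p_def by blast
        then show False using hd d_def by simp
      qed
      have "coprime q h'" using prime_imp_coprime[OF pr] h'(2) by blast
      then have cop: "coprime h' (q ^ k)" by (simp add: coprime_commute)
      then have g1: "gcd h' (q ^ k) = 1" by (simp add: coprime_iff_gcd_eq_1)
      define s where "s = fst (bezout_coefficients h' (q ^ k))"
      define t where "t = snd (bezout_coefficients h' (q ^ k))"
      have bez: "s * h' + t * q ^ k = 1"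
        using bezout_coefficients_fst_snd[of h' "q ^ k"] g1 by (simp add: s_def t_def)
      define w where "w = peval (q ^ j) f v"
      have "peval h f v = peval (q ^ j) f (peval h' f v)"
        by (subst hj) (simp add: peval_mult[OF lf])
      then have "peval h' f w = peval h f v"
        by (simp add: w_def peval_commute[OF lf])
      then have hw: "peval h' f w = 0" using hv by simp
      have kw: "peval (q ^ k) f w = 0"
        using pv by (simp add: w_def p_def peval_commute[OF lf] peval_zero_x[OF lf])
      have "w = peval (s * h' + t * q ^ k) f w" using bez by (simp add: peval_1[OF lf])
      also have "\<dots> = 0" by (simp add: peval_add[OF lf] peval_mult[OF lf] hw kw)
      finally have w0': "w = 0" .
      have "q ^ k' = q ^ (k' - j) * q ^ j" using jk kk by (simp add: power_add[symmetric])
      then have "peval (q ^ k') f v = peval (q ^ (k' - j)) f w"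
        by (simp add: w_def peval_mult[OF lf])
      then show False using v w0' by simp
    qed
    define Z where "Z = {peval h f v | h. degree h < d}"
    have DZ: "DEC f Z" unfolding Z_def d_def
      using CYC[OF lf _ pv] dpos CI d_def by simp
    have ZW: "Z \<subseteq> W" unfolding Z_def using peval_in_sub[OF lf W inv v(1)] by blast
    have vZ: "v \<in> Z" unfolding Z_def using dpos by (intro CollectI exI[of _ 1]) (simp add: peval_1[OF lf])
    have v0: "v \<noteq> 0" using CI[of 1] dpos by (simp add: peval_1[OF lf])
    have Zadd: "x + y \<in> Z" if xZ: "x \<in> Z" and yZ: "y \<in> Z" for x y
    proof -
      obtain h1 h2 where "x = peval h1 f v" "degree h1 < d" "y = peval h2 f v" "degree h2 < d"
        using xZ yZ unfolding Z_def by blast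
      then show ?thesis unfolding Z_def
        by (intro CollectI exI[of _ "h1 + h2"])
           (simp add: peval_add[OF lf] degree_add_less)
    qed
    define vs where "vs i = (f ^^ i) v" for i
    have vs_inj: "inj_on vs {..<d}"
    proof (rule inj_onI)
      fix i j assume ij: "i \<in> {..<d}" "j \<in> {..<d}" "vs i = vs j"
      show "i = j"
      proof (rule ccontr)
        assume nij: "i \<noteq> j"
        define h where "h = monom (1::bit) i + monom 1 j"
        have "coeff h i = 1" using nij by (simp add: h_def coeff_monom)
        then have "h \<noteq> 0" by auto
        moreover have "degree h < d" using ij unfolding h_def
          by (intro degree_add_less) (auto intro: le_less_trans[OF degree_monom_le])
        moreover have "peval h f v = 0"
          using ij by (simp add: h_def peval_add[OF lf] peval_monom[OF lf] vs_def)
        ultimately show False using CI by blast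
      qed
    qed
    define B0 where "B0 = vs ` {..<d}"
    have indB0: "vec.independent B0"
    proof (rule vec.independent_if_scalars_zero)
      show "finite B0" by (simp add: B0_def)
      fix c x assume sum0: "(\<Sum>x\<in>B0. c x *s x) = 0" and xB: "x \<in> B0"
      define H where "H = (\<Sum>i<d. monom (c (vs i)) i)"
      have "peval H f v = (\<Sum>i<d. c (vs i) *s vs i)"
        by (simp add: H_def peval_sum_poly[OF lf] peval_monom[OF lf] vs_def)
      also have "\<dots> = (\<Sum>x\<in>B0. c x *s x)"
        unfolding B0_def by (rule sum.reindex[OF vs_inj, symmetric, unfolded comp_def])
      finally have Hv: "peval H f v = 0" using sum0 by simp
      have dH: "degree H < d"
        unfolding H_def using dpos
        by (intro degree_sum_less) (auto intro: le_less_trans[OF degree_monom_le])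
      have "H = 0" using CI Hv dH by blast
      moreover obtain i where i: "i < d" "x = vs i" using xB B0_def by auto
      moreover have "coeff H i = c (vs i)"
        using i(1) by (simp add: H_def coeff_sum coeff_monom)
      ultimately show "c x = 0" by simp
    qed
    obtain i0 :: 'n where True by blast
    define g0 :: "bit^'n \<Rightarrow> bit^'n" where "g0 b = (if b = vs (d - 1) then (\<chi> i. (1::bit)) else 0)" for b
    define Phi where "Phi = vec.construct B0 g0"
    have linPhi: "lin Phi" unfolding Phi_def by (rule vec.linear_construct[OF indB0])
    define phi where "phi x = Phi x $ i0" for x
    have phi_add: "phi (x + y) = phi x + phi y" for x y
      by (simp add: phi_def lin_add[OF linPhi])
    have phi_0: "phi 0 = 0" by (simp add: phi_def lin_0[OF linPhi])
    have phi_scale: "phi (c *s x) = c * phi x" for c x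
      by (simp add: phi_def lin_scale[OF linPhi])
    have phi_sum: "phi (\<Sum>i\<in>S. g i) = (\<Sum>i\<in>S. phi (g i))" for S and g :: "nat \<Rightarrow> bit^'n"
      by (simp add: phi_def lin_sum[OF linPhi] sum_component)
    have phi_vs: "phi (vs i) = (if i = d - 1 then 1 else 0)" if "i < d" for i
    proof -
      have "Phi (vs i) = g0 (vs i)" unfolding Phi_def
        by (rule vec.construct_basis[OF indB0]) (simp add: B0_def that)
      moreover have "vs i = vs (d - 1) \<longleftrightarrow> i = d - 1"
        using vs_inj that dpos by (auto dest: inj_onD)
      ultimately show ?thesis by (simp add: phi_def g0_def)
    qed
    have phi_peval: "phi (peval h f v) = coeff h (d - 1)" if "degree h < d" for h
    proof -
      have "phi (peval h f v) = (\<Sum>i\<le>degree h. coeff h i * phi (vs i))"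
        by (simp add: peval_as_sum[OF lf] phi_sum phi_scale vs_def)
      also have "\<dots> = (\<Sum>i\<le>degree h. if i = d - 1 then coeff h i else 0)"
        using that by (intro sum.cong) (simp_all add: phi_vs)
      also have "\<dots> = coeff h (d - 1)"
        using that by (auto simp: coeff_eq_0)
      finally show ?thesis .
    qed
    define W' where "W' = {w \<in> W. \<forall>i<d. phi ((f ^^ i) w) = 0}"
    have linfi: "lin (f ^^ i)" for i by (rule lin_funpow[OF lf])
    have subW': "sub W'"
      using W unfolding sub_def W'_def
      by (auto simp: lin_add[OF linfi] lin_0[OF linfi] phi_add phi_0)
    have W'W: "W' \<subseteq> W" unfolding W'_def by blast
    have invW': "f ` W' \<subseteq> W'"
    proof
      fix y assume "y \<in> f ` W'"
      then obtain w where w: "w \<in> W'" "y = f w" by blast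
      have wW: "w \<in> W" using w W'W by blast
      have "phi ((f ^^ i) (f w)) = 0" if i: "i < d" for i
      proof (cases "Suc i < d")
        case True
        have eq: "(f ^^ i) (f w) = (f ^^ Suc i) w" by (simp add: funpow_Suc_right del: funpow.simps)
        have "phi ((f ^^ Suc i) w) = 0" using w(1) True unfolding W'_def by blast
        then show ?thesis by (simp only: eq)
      next
        case False
        then have id: "Suc i = d" using i by simp
        define r where "r = monom 1 d + p"
        have dr: "degree r < d" unfolding r_def using pow_monom_degree_lt[of p d] d_def dpos by simp
        have "(f ^^ i) (f w) = (f ^^ Suc i) w" by (simp add: funpow_Suc_right del: funpow.simps)
        then have "(f ^^ i) (f w) = (f ^^ d) w" using id by simp
        also have "\<dots> = peval (monom 1 d) f w" by (simp add: peval_monom[OF lf])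
        also have "\<dots> = peval r f w"
          using kann wW by (simp add: r_def peval_add[OF lf] p_def)
        finally have "(f ^^ i) (f w) = (\<Sum>j\<le>degree r. coeff r j *s (f ^^ j) w)"
          by (simp add: peval_as_sum[OF lf])
        then have "phi ((f ^^ i) (f w)) = (\<Sum>j\<le>degree r. coeff r j * phi ((f ^^ j) w))"
          by (simp add: phi_sum phi_scale)
        also have "\<dots> = 0"
          using w(1) dr unfolding W'_def by (intro sum.neutral) auto
        finally show ?thesis .
      qed
      then show "y \<in> W'" using w wW inv unfolding W'_def by auto
    qed
    have annW': "\<forall>x\<in>W'. peval (q ^ e) f x = 0" using ann W'W by blast
    have int: "Z \<inter> W' \<subseteq> {0}"
    proof
      fix z assume z: "z \<in> Z \<inter> W'"
      then obtain h where h: "z = peval h f v" "degree h < d" unfolding Z_def by blast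
      show "z \<in> {0}"
      proof (cases "h = 0")
        case True then show ?thesis using h by simp
      next
        case False
        define i where "i = d - 1 - degree h"
        define qq where "qq = monom 1 i * h"
        have "degree qq = d - 1" using False h(2)
          by (simp add: qq_def degree_mult_eq degree_monom_eq i_def)
        then have "coeff qq (d - 1) = 1"
          using False poly_bit_lead[of qq] by (auto simp: qq_def)
        then have "phi (peval qq f v) = 1"
          using phi_peval[of qq] \<open>degree qq = d - 1\<close> dpos by simp
        moreover have "peval qq f v = (f ^^ i) z"
          by (simp add: qq_def h(1) peval_mult[OF lf] peval_monom[OF lf])
        moreover have "i < d" using dpos by (simp add: i_def)
        ultimately have "phi ((f ^^ i) z) = 1" by simp
        then show ?thesis using z unfolding W'_def using \<open>i < d\<close> by auto
      qed
    qed
    have decomp: "\<exists>h. degree h < d \<and> (\<forall>i<r. phi ((f ^^ i) (w + peval h f v)) = 0)"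
      if wW: "w \<in> W" and rd: "r \<le> d" for w r
      using rd
    proof (induct r)
      case 0 then show ?case using dpos by (intro exI[of _ 0]) simp
    next
      case (Suc r)
      then obtain h where h: "degree h < d" "\<forall>i<r. phi ((f ^^ i) (w + peval h f v)) = 0" by auto
      define a where "a = phi ((f ^^ r) (w + peval h f v))"
      define h2 where "h2 = h + monom a (d - 1 - r)"
      have dh2: "degree h2 < d" unfolding h2_def using h(1) Suc.prems dpos
        by (intro degree_add_less) (auto intro: le_less_trans[OF degree_monom_le])
      have key: "phi ((f ^^ i) (w + peval h2 f v)) = phi ((f ^^ i) (w + peval h f v)) + a * (if i = r then 1 else 0)"
        if "i \<le> r" for i
      proof -
        have "(f ^^ i) (w + peval h2 f v) = (f ^^ i) (w + peval h f v) + a *s vs (i + (d - 1 - r))"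
          by (simp add: h2_def peval_add[OF lf] peval_monom[OF lf] lin_add[OF linfi] lin_scale[OF linfi]
              vs_def funpow_add add_ac)
        moreover have "i + (d - 1 - r) < d" using that Suc.prems by simp
        moreover have "i + (d - 1 - r) = d - 1 \<longleftrightarrow> i = r" using that Suc.prems by auto
        ultimately show ?thesis by (simp add: phi_add phi_scale phi_vs)
      qed
      show ?case
      proof (intro exI[of _ h2] conjI allI impI)
        show "degree h2 < d" by (fact dh2)
        fix i assume "i < Suc r"
        then show "phi ((f ^^ i) (w + peval h2 f v)) = 0"
          using key[of i] h(2) by (cases "i = r") (auto simp: a_def)
      qed
    qed
    have Wsum: "W = {a + b | a b. a \<in> Z \<and> b \<in> W'}"
    proof
      show "W \<subseteq> {a + b | a b. a \<in> Z \<and> b \<in> W'}"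
      proof
        fix w assume wW: "w \<in> W"
        obtain h where h: "degree h < d" "\<forall>i<d. phi ((f ^^ i) (w + peval h f v)) = 0"
          using decomp[OF wW, of d] by auto
        have zW: "peval h f v \<in> Z" using h(1) unfolding Z_def by blast
        then have "w + peval h f v \<in> W" using ZW wW W by (auto simp: sub_def)
        then have "w + peval h f v \<in> W'" using h(2) unfolding W'_def by blast
        moreover have "w = peval h f v + (w + peval h f v)" by (simp add: add_ac)
        ultimately show "w \<in> {a + b | a b. a \<in> Z \<and> b \<in> W'}" using zW by blast
      qed
      show "{a + b | a b. a \<in> Z \<and> b \<in> W'} \<subseteq> W" using ZW W'W W by (auto simp: sub_def)
    qed
    have vW': "v \<notin> W'" using int vZ v0 by blast
    have "card W' < card W"
      using W'W v(1) vW' by (intro psubset_card_mono) auto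
    then have DW': "DEC f W'" using less.hyps subW' invW' annW' by blast
    have Zadd': "\<And>x y. x \<in> Z \<Longrightarrow> y \<in> Z \<Longrightarrow> x + y \<in> Z" using Zadd by blast
    have W'add: "\<And>x y. x \<in> W' \<Longrightarrow> y \<in> W' \<Longrightarrow> x + y \<in> W'" using subW' by (simp add: sub_def)
    show ?thesis by (rule DEC_sum[OF lf Zadd' W'add int Wsum DZ DW'])
  qed
qed


lemma DEC_ann:
  fixes f :: "bit^'n \<Rightarrow> bit^'n"
  assumes lf: "lin f"
  shows "P \<noteq> 0 \<Longrightarrow> sub W \<Longrightarrow> f ` W \<subseteq> W \<Longrightarrow> (\<forall>x\<in>W. peval P f x = 0) \<Longrightarrow> DEC f W"
proof (induct "degree P" arbitrary: P W rule: less_induct)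
  case less
  note pz [simp] = peval_zero_x[OF lf] peval_1[OF lf]
  note P0 = less.prems(1) and W = less.prems(2) and inv = less.prems(3) and ann = less.prems(4)
  show ?case
  proof (cases "is_unit P")
    case True
    then have "P = 1" by (rule bit_poly_unit)
    then have "W = {0}" using ann W by (auto simp: sub_def)
    then show ?thesis using DEC_zero[OF lf] by simp
  next
    case False
    obtain q where q: "q dvd P" "prime q" using prime_divisor_exists[OF P0 False] by blast
    have qnu: "\<not> is_unit q" using q(2) not_prime_unit by blast
    define e where "e = multiplicity q P"
    obtain b where b: "P = q ^ e * b" "\<not> q dvd b"
      using multiplicity_decompose'[OF P0 qnu] unfolding e_def by blast
    have b0: "b \<noteq> 0" using b P0 by auto
    have q0: "q \<noteq> 0" using q(2) by auto
    show ?thesis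
    proof (cases "is_unit b")
      case True
      then have "b = 1" by (rule bit_poly_unit)
      then have "\<forall>x\<in>W. peval (q ^ e) f x = 0" using ann b by simp
      then show ?thesis using DEC_pp[OF lf q(2) W inv] by blast
    next
      case bnu: False
      have "e > 0" unfolding e_def using q(1) multiplicity_gt_zero_iff[OF P0 qnu] by simp
      then have dqe: "degree (q ^ e) > 0"
        using prime_degree_pos[OF q(2)] q0 by (simp add: degree_power_eq)
      have db: "degree b > 0" using bnu b0 is_unit_iff_degree[OF b0] by simp
      have dP: "degree P = degree (q ^ e) + degree b"
        using b b0 q0 by (simp add: degree_mult_eq)
      have cop: "coprime (q ^ e) b"
        using prime_imp_coprime[OF q(2)] b(2) by simp
      then have g1: "gcd (q ^ e) b = 1" by (simp add: coprime_iff_gcd_eq_1)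
      define s where "s = fst (bezout_coefficients (q ^ e) b)"
      define t where "t = snd (bezout_coefficients (q ^ e) b)"
      have bez: "s * q ^ e + t * b = 1"
        using bezout_coefficients_fst_snd[of "q ^ e" b] g1 by (simp add: s_def t_def)
      define W1 where "W1 = {x \<in> W. peval (q ^ e) f x = 0}"
      define W2 where "W2 = {x \<in> W. peval b f x = 0}"
      have sub1: "sub W1" using W unfolding sub_def W1_def by (auto simp: peval_linear_x[OF lf])
      have sub2: "sub W2" using W unfolding sub_def W2_def by (auto simp: peval_linear_x[OF lf])
      have inv1: "f ` W1 \<subseteq> W1" using inv unfolding W1_def
        by (auto simp: peval_comm[OF lf, symmetric] lin_0[OF lf])
      have inv2: "f ` W2 \<subseteq> W2" using inv unfolding W2_def
        by (auto simp: peval_comm[OF lf, symmetric] lin_0[OF lf])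
      have lt1: "degree (q ^ e) < degree P" using dP db by simp
      have lt2: "degree b < degree P" using dP dqe by simp
      have ne1: "q ^ e \<noteq> 0" using q0 by simp
      have an1: "\<forall>x\<in>W1. peval (q ^ e) f x = 0" unfolding W1_def by blast
      have an2: "\<forall>x\<in>W2. peval b f x = 0" unfolding W2_def by blast
      have D1: "DEC f W1" by (rule less.hyps[OF lt1 ne1 sub1 inv1 an1])
      have D2: "DEC f W2" by (rule less.hyps[OF lt2 b0 sub2 inv2 an2])
      have int: "W1 \<inter> W2 \<subseteq> {0}"
      proof
        fix x assume x: "x \<in> W1 \<inter> W2"
        have "x = peval (s * q ^ e + t * b) f x" using bez by simp
        also have "\<dots> = 0" using x unfolding W1_def W2_def
          by (simp add: peval_add[OF lf] peval_mult[OF lf])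
        finally show "x \<in> {0}" by simp
      qed
      have Wsum: "W = {a + c | a c. a \<in> W1 \<and> c \<in> W2}"
      proof
        show "W \<subseteq> {a + c | a c. a \<in> W1 \<and> c \<in> W2}"
        proof
          fix x assume xW: "x \<in> W"
          have "x = peval (t * b) f x + peval (s * q ^ e) f x"
            using bez by (metis peval_1[OF lf] peval_add[OF lf] add.commute)
          moreover have "peval (t * b) f x \<in> W1"
          proof -
            have "peval (q ^ e) f (peval (t * b) f x) = peval (t * (q ^ e * b)) f x"
              by (simp only: peval_mult[OF lf, symmetric] ac_simps)
            also have "\<dots> = peval t f (peval P f x)" by (simp only: b(1)[symmetric] peval_mult[OF lf])
            finally have "peval (q ^ e) f (peval (t * b) f x) = peval t f (peval P f x)" .
            then show ?thesis using xW ann peval_in_sub[OF lf W inv xW] unfolding W1_def by simp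
          qed
          moreover have "peval (s * q ^ e) f x \<in> W2"
          proof -
            have "peval b f (peval (s * q ^ e) f x) = peval (s * (q ^ e * b)) f x"
              by (simp only: peval_mult[OF lf, symmetric] ac_simps)
            also have "\<dots> = peval s f (peval P f x)" by (simp only: b(1)[symmetric] peval_mult[OF lf])
            finally have "peval b f (peval (s * q ^ e) f x) = peval s f (peval P f x)" .
            then show ?thesis using xW ann peval_in_sub[OF lf W inv xW] unfolding W2_def by simp
          qed
          ultimately show "x \<in> {a + c | a c. a \<in> W1 \<and> c \<in> W2}" by blast
        qed
        show "{a + c | a c. a \<in> W1 \<and> c \<in> W2} \<subseteq> W" using W unfolding W1_def W2_def sub_def by auto
      qed
      have c1: "\<And>x y. x \<in> W1 \<Longrightarrow> y \<in> W1 \<Longrightarrow> x + y \<in> W1" using sub1 by (simp add: sub_def)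
      have c2: "\<And>x y. x \<in> W2 \<Longrightarrow> y \<in> W2 \<Longrightarrow> x + y \<in> W2" using sub2 by (simp add: sub_def)
      show ?thesis by (rule DEC_sum[OF lf c1 c2 int Wsum D1 D2])
    qed
  qed
qed

lemma DEC_UNIV:
  fixes f :: "bit^'n \<Rightarrow> bit^'n"
  assumes lf: "lin f"
  shows "DEC f UNIV"
proof -
  obtain P where "P \<noteq> 0" "\<forall>x. peval P f x = 0" using ann_exists[OF lf] by blast
  then show ?thesis using DEC_ann[OF lf, of P UNIV] by (simp add: sub_def)
qed

theorem corollary3p3:
  fixes A :: "bit ^ 'n ^ 'n"
  shows "\<exists>N D :: bit ^ 'n ^ 'n. A = N + D \<and> N ** N = 0 \<and> D ** D ** D ** D = D"
  proof -
  define f where "f x = A *v x" for x :: "bit^'n"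
  have lf: "lin f" unfolding f_def by (rule matrix_vector_mul_linear_gen)
  obtain N D where ND: "\<forall>x\<in>UNIV. \<forall>y\<in>UNIV. N (x+y) = N x + N y \<and> D (x+y) = D x + D y"
    "\<forall>x\<in>UNIV. N x \<in> UNIV \<and> D x \<in> UNIV \<and> f x = N x + D x \<and> N (N x) = 0 \<and> D (D (D (D x))) = D x"
    using DEC_UNIV[OF lf] unfolding DEC_def by blast
  have lN: "lin N" by (rule lin_intro) (use ND in blast)
  have lD: "lin D" by (rule lin_intro) (use ND in blast)
  define Nm where "Nm = matrix N"
  define Dm where "Dm = matrix D"
  have Nv: "Nm *v x = N x" for x unfolding Nm_def by (rule matrix_works[OF lN])
  have Dv: "Dm *v x = D x" for x unfolding Dm_def by (rule matrix_works[OF lD])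
  have "A *v x = (Nm + Dm) *v x" for x
    using ND(2) by (simp add: matrix_vector_mult_add_rdistrib Nv Dv f_def)
  then have "A = Nm + Dm" by (simp add: matrix_eq)
  moreover have "(Nm ** Nm) *v x = 0 *v x" for x
    using ND(2) by (simp add: matrix_vector_mul_assoc[symmetric] Nv)
  then have "Nm ** Nm = 0" by (simp add: matrix_eq)
  moreover have "(Dm ** Dm ** Dm ** Dm) *v x = Dm *v x" for x
    using ND(2) by (simp add: matrix_vector_mul_assoc[symmetric] Dv)
  then have "Dm ** Dm ** Dm ** Dm = Dm" by (simp add: matrix_eq)
  ultimately show ?thesis by blast
qed


end
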